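(* For every integer $m\ge0$ and every integer $l>1$, \[ \mu_l^{(1,m+2)}=2P_{l-1}^{\{-2,-1,m\}} . \]
   Context: An $n$-board is the strip $[0,n]\times[0,1]$ divided into unit cells, each split into a left and a right half (slot). A $(w,g;t)$-comb is a tile consisting of a row of $t$ rectangles (teeth) of size $w\times1$, consecutive teeth separated by a gap of width $g$; gaps are not part of the tile and may be occupied by other tiles. (A $(\frac12,\frac12;1)$-comb is a half-square $\frac12\times1$.) A tiling is a placement of translated (unrotated) combs whose teeth cover the board exactly without overlap. Given a tiling of an $n$-board, an integer $x$ with $0<x<n$ is a cut point if every comb has all of its teeth in $[0,x]$ or all in $[x,n]$. A metatile of length $l$ is a tiling of an $l$-board with no cut point. A metatile is mixed if it contains combs of more than one type. For integers $1\le m_1<m_2$, $\mu_l^{(m_1,m_2)}$ is the number of mixed metatiles of length $l$ when tiling with $(\frac12,\frac12;m_1)$- and $(\frac12,\frac12;m_2)$-combs. For a finite set $W$ of integers, $P_n^W$ is the number of permutations $\pi$ of $\{1,\dots,n\}$ with $\pi(i)-i\in W$ for all $i$ (equivalently, the permanent of the $n\times n$ $(0,1)$ matrix whose $(i,j)$ entry is $1$ iff $j-i\in W$), with $P_0^W=1$. *)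

theory Defs
  imports Main "HOL-Combinatorics.Permutations"
begin

text \<open>Discrete model: the n-board [0,n] x [0,1] has 2n slots (half-cells), slot k being
  [k/2,(k+1)/2]. A placed (1/2,1/2;t)-comb is a pair (t,p): its teeth occupy slots
  p, p+2, ..., p+2(t-1).\<close>

definition comb_teeth :: "nat \<Rightarrow> nat \<Rightarrow> nat set" where
  "comb_teeth t p = {p + 2 * i | i. i < t}"

definition is_tiling :: "nat set \<Rightarrow> nat \<Rightarrow> (nat \<times> nat) set \<Rightarrow> bool" where
  "is_tiling T n C \<longleftrightarrow> finite C \<and> (\<forall>c\<in>C. fst c \<in> T)
     \<and> (\<forall>c\<in>C. \<forall>c'\<in>C. c \<noteq> c' \<longrightarrow> comb_teeth (fst c) (snd c) \<inter> comb_teeth (fst c') (snd c') = {})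
     \<and> (\<Union>c\<in>C. comb_teeth (fst c) (snd c)) = {..<2 * n}"

definition is_cut_point :: "nat \<Rightarrow> (nat \<times> nat) set \<Rightarrow> nat \<Rightarrow> bool" where
  "is_cut_point n C x \<longleftrightarrow> 0 < x \<and> x < n \<and>
     (\<forall>c\<in>C. comb_teeth (fst c) (snd c) \<subseteq> {..<2 * x} \<or> comb_teeth (fst c) (snd c) \<subseteq> {2 * x..})"

definition is_metatile :: "nat set \<Rightarrow> nat \<Rightarrow> (nat \<times> nat) set \<Rightarrow> bool" where
  "is_metatile T l C \<longleftrightarrow> is_tiling T l C \<and> \<not> (\<exists>x. is_cut_point l C x)"

definition is_mixed :: "(nat \<times> nat) set \<Rightarrow> bool" where
  "is_mixed C \<longleftrightarrow> card (fst ` C) > 1"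

definition mu :: "nat \<Rightarrow> nat \<Rightarrow> nat \<Rightarrow> nat" where
  "mu m1 m2 l = card {C. is_metatile {m1, m2} l C \<and> is_mixed C}"

definition P_W :: "nat \<Rightarrow> int set \<Rightarrow> nat" where
  "P_W n W = card {\<pi>. \<pi> permutes {1..n} \<and> (\<forall>i\<in>{1..n}. int (\<pi> i) - int i \<in> W)}"

end

theory Submission
  imports Defs
begin


definition goodU :: "nat \<Rightarrow> nat \<Rightarrow> nat set \<Rightarrow> bool" where
"goodU m n U \<longleftrightarrow> (\<forall>u\<in>U. 1 \<le> u \<and> u + m \<le> n) \<and> (\<forall>x. 1 \<le> x \<and> x \<le> n \<longrightarrow> (\<exists>u\<in>U. u \<le> x \<and> x \<le> u + m))
   \<and> (\<forall>a\<in>U. \<forall>b\<in>U. \<forall>c\<in>U. a < b \<and> b < c \<longrightarrow> a + m + 2 \<le> c)"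

definition validp :: "nat \<Rightarrow> nat \<Rightarrow> (nat \<Rightarrow> nat) \<Rightarrow> bool" where
"validp m n p \<longleftrightarrow> p permutes {1..n} \<and> (\<forall>i\<in>{1..n}. p i = i + m \<or> p i + 1 = i \<or> p i + 2 = i)"

definition upset :: "nat \<Rightarrow> nat \<Rightarrow> (nat \<Rightarrow> nat) \<Rightarrow> nat set" where
"upset m n p = {i\<in>{1..n}. p i = i + m}"

definition dbl :: "nat \<Rightarrow> nat set \<Rightarrow> nat \<Rightarrow> bool" where
"dbl m U y \<longleftrightarrow> (\<exists>a\<in>U. \<exists>b\<in>U. a < b \<and> b \<le> y \<and> y \<le> a + m)"

definition perm_of :: "nat \<Rightarrow> nat \<Rightarrow> nat set \<Rightarrow> nat \<Rightarrow> nat" where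
"perm_of m n U i = (if i \<in> {1..n} then (if i \<in> U then i + m else if dbl m U (i - 1) then i - 2 else i - 1) else i)"

lemma validp_iff:
  "(p permutes {1..n} \<and> (\<forall>i\<in>{1..n}. int (p i) - int i \<in> {-2, -1, int m})) \<longleftrightarrow> validp m n p"
  unfolding validp_def by (auto; fastforce)

lemma perm_flow:
  assumes "p permutes A" "finite A"
  shows "card {i\<in>A. P i \<and> \<not> P (p i)} = card {i\<in>A. \<not> P i \<and> P (p i)}"
proof -
  have "p ` {i\<in>A. P (p i)} = {j\<in>A. P j}"
    using assms(1) permutes_in_image[OF assms(1)]
    by (auto, metis (no_types, lifting) image_iff mem_Collect_eq permutes_image)
  moreover have "inj_on p {i\<in>A. P (p i)}"
    using permutes_inj[OF assms(1)] by (auto intro: inj_on_subset)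
  ultimately have e: "card {i\<in>A. P (p i)} = card {j\<in>A. P j}"
    by (metis card_image)
  have s1: "{j\<in>A. P j} = {i\<in>A. P i \<and> P (p i)} \<union> {i\<in>A. P i \<and> \<not> P (p i)}" by auto
  have s2: "{j\<in>A. P (p j)} = {i\<in>A. P i \<and> P (p i)} \<union> {i\<in>A. \<not> P i \<and> P (p i)}" by auto
  have c1: "card {j\<in>A. P j} = card {i\<in>A. P i \<and> P (p i)} + card {i\<in>A. P i \<and> \<not> P (p i)}"
    unfolding s1 by (rule card_Un_disjoint) (use assms(2) in auto)
  have c2: "card {j\<in>A. P (p j)} = card {i\<in>A. P i \<and> P (p i)} + card {i\<in>A. \<not> P i \<and> P (p i)}"
    unfolding s2 by (rule card_Un_disjoint) (use assms(2) in auto)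
  show ?thesis using e c1 c2 by linarith
qed

lemma flow:
  assumes v: "validp m n p" and x: "1 \<le> x" "x \<le> n"
  shows "card {u\<in>upset m n p. u < x \<and> x \<le> u + m} =
    (if x \<in> upset m n p then 0 else 1) + (if x + 1 \<le> n \<and> p (x+1) + 2 = x + 1 then 1 else 0)"
proof -
  have perm: "p permutes {1..n}" and st: "\<And>i. i\<in>{1..n} \<Longrightarrow> p i = i + m \<or> p i + 1 = i \<or> p i + 2 = i"
    using v unfolding validp_def by auto
  have rng: "\<And>i. i\<in>{1..n} \<Longrightarrow> p i \<in> {1..n}" using permutes_in_image[OF perm] by auto
  have fl: "card {i\<in>{1..n}. i < x \<and> \<not> p i < x} = card {i\<in>{1..n}. \<not> i < x \<and> p i < x}"
    by (rule perm_flow[OF perm]) simp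
  have L: "{i\<in>{1..n}. i < x \<and> \<not> p i < x} = {u\<in>upset m n p. u < x \<and> x \<le> u + m}"
    unfolding upset_def using st by force
  have R: "{i\<in>{1..n}. \<not> i < x \<and> p i < x} =
     (if x \<in> upset m n p then {} else {x}) \<union> (if x + 1 \<le> n \<and> p (x+1) + 2 = x + 1 then {x+1} else {})"
  proof (intro set_eqI iffI)
    fix i assume i: "i \<in> {i\<in>{1..n}. \<not> i < x \<and> p i < x}"
    then have "i = x \<or> i = x + 1" using st[of i] by auto
    then show "i \<in> (if x \<in> upset m n p then {} else {x}) \<union> (if x + 1 \<le> n \<and> p (x+1) + 2 = x + 1 then {x+1} else {})"
      using i st[of i] unfolding upset_def by auto
  next
    fix i assume "i \<in> (if x \<in> upset m n p then {} else {x}) \<union> (if x + 1 \<le> n \<and> p (x+1) + 2 = x + 1 then {x+1} else {})"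
    then show "i \<in> {i\<in>{1..n}. \<not> i < x \<and> p i < x}"
      using x st[of x] unfolding upset_def by (auto split: if_splits)
  qed
  show ?thesis unfolding L[symmetric] fl R by (auto split: if_splits)
qed


lemma card2_ex:
  fixes A :: "nat set"
  assumes "finite A" "2 \<le> card A"
  shows "\<exists>a\<in>A. \<exists>b\<in>A. a < b"
proof -
  obtain a where a: "a \<in> A" using assms by fastforce
  have "card (A - {a}) \<ge> 1" using assms a by simp
  then have "A - {a} \<noteq> {}" by (metis card.empty not_one_le_zero)
  then obtain b where b: "b \<in> A" "b \<noteq> a" by blast
  show ?thesis using a b by (metis linorder_neqE_nat)
qed

lemma card_ge2_of:
  fixes A :: "nat set"
  assumes "finite A" "a \<in> A" "b \<in> A" "a \<noteq> b"
  shows "2 \<le> card A"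
proof -
  have "card {a, b} \<le> card A" using assms by (intro card_mono) auto
  then show ?thesis using assms by simp
qed

context
  fixes m n p
  assumes v: "validp m n p"
begin

lemma vperm: "p permutes {1..n}" using v unfolding validp_def by auto
lemma vst: "i\<in>{1..n} \<Longrightarrow> p i = i + m \<or> p i + 1 = i \<or> p i + 2 = i" using v unfolding validp_def by auto
lemma vrng: "i\<in>{1..n} \<Longrightarrow> p i \<in> {1..n}" using permutes_in_image[OF vperm] by auto

lemma finL: "finite {u\<in>upset m n p. u < x \<and> x \<le> u + m}"
  unfolding upset_def by auto

lemma up1: "1 \<le> n \<Longrightarrow> 1 \<in> upset m n p"
  using vst[of 1] vrng[of 1] unfolding upset_def by auto

lemma F1: "1 \<le> x \<Longrightarrow> x \<le> n \<Longrightarrow> x \<notin> upset m n p \<Longrightarrow> \<exists>u\<in>upset m n p. u < x \<and> x \<le> u + m"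
proof -
  assume a: "1 \<le> x" "x \<le> n" "x \<notin> upset m n p"
  have "card {u\<in>upset m n p. u < x \<and> x \<le> u + m} \<noteq> 0" using flow[OF v, of x] a by simp
  then have "{u\<in>upset m n p. u < x \<and> x \<le> u + m} \<noteq> {}" by (metis card.empty)
  then show ?thesis by blast
qed

lemma F3: "1 \<le> x \<Longrightarrow> x \<le> n \<Longrightarrow> x \<in> upset m n p \<Longrightarrow> a \<in> upset m n p \<Longrightarrow> b \<in> upset m n p
   \<Longrightarrow> a < b \<Longrightarrow> b < x \<Longrightarrow> x \<le> a + m \<Longrightarrow> False"
proof -
  assume h: "1 \<le> x" "x \<le> n" "x \<in> upset m n p" "a \<in> upset m n p" "b \<in> upset m n p" "a < b" "b < x" "x \<le> a + m"
  have "2 \<le> card {u\<in>upset m n p. u < x \<and> x \<le> u + m}"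
    by (rule card_ge2_of[OF finL, of a x b]) (use h in auto)
  then show False using flow[OF v, of x] h by (simp split: if_splits)
qed

lemma F4: "1 \<le> x \<Longrightarrow> x + 1 \<le> n \<Longrightarrow> x \<in> upset m n p \<Longrightarrow> x + 1 \<in> upset m n p \<Longrightarrow> a \<in> upset m n p
   \<Longrightarrow> a < x \<Longrightarrow> x \<le> a + m \<Longrightarrow> False"
proof -
  assume a: "1 \<le> x" "x + 1 \<le> n" "x \<in> upset m n p" "x + 1 \<in> upset m n p" "a \<in> upset m n p" "a < x" "x \<le> a + m"
  then have "p (x+1) = x + 1 + m" unfolding upset_def by auto
  then have "card {u\<in>upset m n p. u < x \<and> x \<le> u + m} = 0" using flow[OF v, of x] a by auto
  then show False using a finL[of x] by auto
qed

lemma F5: "1 \<le> x \<Longrightarrow> x \<le> n \<Longrightarrow> a \<in> upset m n p \<Longrightarrow> b \<in> upset m n p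
   \<Longrightarrow> a < b \<Longrightarrow> b < x \<Longrightarrow> x \<le> a + m \<Longrightarrow> x + 1 \<le> n \<and> p (x+1) + 2 = x + 1"
proof -
  assume h: "1 \<le> x" "x \<le> n" "a \<in> upset m n p" "b \<in> upset m n p" "a < b" "b < x" "x \<le> a + m"
  have "2 \<le> card {u\<in>upset m n p. u < x \<and> x \<le> u + m}"
    by (rule card_ge2_of[OF finL, of a x b]) (use h in auto)
  then show ?thesis using flow[OF v, of x] h by (simp split: if_splits)
qed

lemma F2:
  assumes x: "1 \<le> x" "x + 1 \<le> n" "x + 1 \<notin> upset m n p"
  shows "p (x+1) + 2 = x + 1 \<longleftrightarrow> dbl m (upset m n p) x"
proof
  assume h: "p (x+1) + 2 = x + 1"
  have xn: "x \<le> n" using x by simp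
  show "dbl m (upset m n p) x"
  proof (cases "x \<in> upset m n p")
    case True
    then have "card {u\<in>upset m n p. u < x \<and> x \<le> u + m} = 1" using flow[OF v x(1) xn] x h by simp
    then have "{u\<in>upset m n p. u < x \<and> x \<le> u + m} \<noteq> {}" by (metis card.empty zero_neq_one)
    then obtain a where "a \<in> upset m n p" "a < x" "x \<le> a + m" by blast
    then show ?thesis unfolding dbl_def using True by blast
  next
    case False
    then have "card {u\<in>upset m n p. u < x \<and> x \<le> u + m} = 2" using flow[OF v x(1) xn] x h by simp
    then have "2 \<le> card {u\<in>upset m n p. u < x \<and> x \<le> u + m}" by simp
    from card2_ex[OF finL this] obtain a b where "a \<in> {u\<in>upset m n p. u < x \<and> x \<le> u + m}" "b \<in> {u\<in>upset m n p. u < x \<and> x \<le> u + m}" "a < b"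
      by blast
    then show ?thesis unfolding dbl_def by force
  qed
next
  assume "dbl m (upset m n p) x"
  then obtain a b where ab: "a \<in> upset m n p" "b \<in> upset m n p" "a < b" "b \<le> x" "x \<le> a + m" unfolding dbl_def by auto
  have xn: "x \<le> n" using x by simp
  show "p (x+1) + 2 = x + 1"
  proof (cases "x \<in> upset m n p")
    case True
    have "a \<in> {u\<in>upset m n p. u < x \<and> x \<le> u + m}" using ab by auto
    then have "card {u\<in>upset m n p. u < x \<and> x \<le> u + m} \<noteq> 0" using finL[of x] by auto
    then show ?thesis using flow[OF v x(1) xn] x True by (simp split: if_splits)
  next
    case False
    then have "b < x" using ab by (metis le_neq_implies_less)
    then show ?thesis using F5[of x a b] ab x by simp
  qed
qed

lemma good_upset:
  assumes "1 \<le> n"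
  shows "goodU m n (upset m n p)"
  unfolding goodU_def
proof (intro conjI)
  show "\<forall>u\<in>upset m n p. 1 \<le> u \<and> u + m \<le> n"
  proof
    fix u assume "u \<in> upset m n p"
    then have u: "u \<in> {1..n}" "p u = u + m" by (auto simp: upset_def)
    then show "1 \<le> u \<and> u + m \<le> n" using vrng[of u] by simp
  qed
next
  show "\<forall>x. 1 \<le> x \<and> x \<le> n \<longrightarrow> (\<exists>u\<in>upset m n p. u \<le> x \<and> x \<le> u + m)"
  proof (intro allI impI)
    fix x assume x: "1 \<le> x \<and> x \<le> n"
    show "\<exists>u\<in>upset m n p. u \<le> x \<and> x \<le> u + m"
    proof (cases "x \<in> upset m n p")
      case True then show ?thesis by force
    next
      case False
      then obtain u where "u\<in>upset m n p" "u < x" "x \<le> u + m" using F1[of x] x by blast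
      then show ?thesis by (intro bexI[of _ u]) simp_all
    qed
  qed
next
 show "\<forall>a\<in>upset m n p. \<forall>b\<in>upset m n p. \<forall>c\<in>upset m n p. a < b \<and> b < c \<longrightarrow> a + m + 2 \<le> c"
 proof (intro ballI impI)
  fix a b c assume abc: "a \<in> upset m n p" "b \<in> upset m n p" "c \<in> upset m n p" "a < b \<and> b < c"
  have cn: "1 \<le> c" "c \<le> n" "a \<ge> 1" using abc unfolding upset_def by auto
  have pc: "p c = c + m" using abc unfolding upset_def by simp
  show "a + m + 2 \<le> c"
  proof (rule ccontr)
    assume "\<not> a + m + 2 \<le> c"
    then consider "c \<le> a + m" | "c = a + m + 1" "b + 1 < c" | "c = a + m + 1" "b + 1 = c" using abc by linarith
    then show False
    proof cases
      case 1 show False by (rule F3[of c a b]) (use abc cn 1 in simp_all)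
    next
      case 2
      have "c - 1 + 1 \<le> n \<and> p (c - 1 + 1) + 2 = c - 1 + 1" by (rule F5[of "c - 1" a b]) (use abc cn 2 in simp_all)
      then have "p c + 2 = c" using cn by simp
      then show False using pc by simp
    next
      case 3 show False by (rule F4[of b a]) (use abc cn 3 in simp_all)
    qed
  qed
 qed
qed

lemma p_eq_perm_of:
  assumes "1 \<le> n"
  shows "p = perm_of m n (upset m n p)"
proof
  fix i
  show "p i = perm_of m n (upset m n p) i"
  proof (cases "i \<in> {1..n}")
    case False
    have "perm_of m n (upset m n p) i = i" unfolding perm_of_def using False by (rule if_not_P)
    then show ?thesis using permutes_not_in[OF vperm False] by simp
  next
    case True
    show ?thesis
    proof (cases "i \<in> upset m n p")
      case True then show ?thesis unfolding perm_of_def upset_def by simp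
    next
      case False
      have "i \<noteq> 1" using False up1 assms by blast
      then have i2: "2 \<le> i" using True by simp
      have "p (i - 1 + 1) + 2 = i - 1 + 1 \<longleftrightarrow> dbl m (upset m n p) (i - 1)"
        by (rule F2[of "i - 1"]) (use i2 True False in simp_all)
      then have e: "p i + 2 = i \<longleftrightarrow> dbl m (upset m n p) (i - 1)" using i2 by simp
      have "p i \<noteq> i + m" using False True unfolding upset_def by simp
      then have "p i + 1 = i \<or> p i + 2 = i" using vst[OF True] by blast
      then show ?thesis using e True False unfolding perm_of_def by auto
    qed
  qed
qed

end


context
  fixes m n U
  assumes g: "goodU m n U"
begin

lemma gU: "u \<in> U \<Longrightarrow> 1 \<le> u \<and> u + m \<le> n" using g unfolding goodU_def by blast
lemma gcov: "1 \<le> x \<Longrightarrow> x \<le> n \<Longrightarrow> \<exists>u\<in>U. u \<le> x \<and> x \<le> u + m" using g unfolding goodU_def by blast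
lemma gtri: "a \<in> U \<Longrightarrow> b \<in> U \<Longrightarrow> c \<in> U \<Longrightarrow> a < b \<Longrightarrow> b < c \<Longrightarrow> a + m + 2 \<le> c"
  using g unfolding goodU_def by blast

lemma gone: "1 \<le> n \<Longrightarrow> 1 \<in> U"
proof -
  assume "1 \<le> n"
  then obtain u where "u \<in> U" "u \<le> 1" using gcov[of 1] by auto
  then show ?thesis using gU[of u] by (metis le_antisym)
qed

lemma sig_down:
  assumes i: "i \<in> {1..n}" "i \<notin> U"
  shows "2 \<le> i" "perm_of m n U i = (if dbl m U (i - 1) then i - 2 else i - 1)"
proof -
  have "1 \<le> n" using i by simp
  then have "1 \<in> U" by (rule gone)
  then have "i \<noteq> 1" using i by auto
  then show "2 \<le> i" using i by simp
  show "perm_of m n U i = (if dbl m U (i - 1) then i - 2 else i - 1)" using i unfolding perm_of_def by simp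
qed

lemma sig_up: "i \<in> U \<Longrightarrow> perm_of m n U i = i + m"
proof -
  assume "i \<in> U"
  then have "i \<in> {1..n}" using gU[of i] by simp
  then show ?thesis using \<open>i \<in> U\<close> unfolding perm_of_def by simp
qed

lemma sig_rng:
  assumes i: "i \<in> {1..n}"
  shows "perm_of m n U i \<in> {1..n}"
proof (cases "i \<in> U")
  case True then show ?thesis using sig_up[OF True] gU[OF True] by simp
next
  case False
  note d = sig_down[OF i False]
  show ?thesis
  proof (cases "dbl m U (i - 1)")
    case True
    then obtain a b where ab: "a \<in> U" "b \<in> U" "a < b" "b \<le> i - 1" unfolding dbl_def by auto
    have "1 \<le> a" using gU[OF ab(1)] by simp
    then have "3 \<le> i" using ab by linarith
    have "perm_of m n U i = i - 2" using d True by simp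
    moreover have "1 \<le> i - 2" "i - 2 \<le> n" using \<open>3 \<le> i\<close> i by auto
    ultimately show ?thesis by simp
  next
    case False
    then have "perm_of m n U i = i - 1" using d by simp
    moreover have "1 \<le> i - 1" "i - 1 \<le> n" using d(1) i by auto
    ultimately show ?thesis by simp
  qed
qed

lemma dbl_mono: "dbl m U i \<Longrightarrow> i \<notin> U \<Longrightarrow> dbl m U (i - 1)"
proof -
  assume "dbl m U i" "i \<notin> U"
  then obtain a b where ab: "a \<in> U" "b \<in> U" "a < b" "b \<le> i" "i \<le> a + m" unfolding dbl_def by auto
  have "b \<noteq> i" using ab \<open>i \<notin> U\<close> by auto
  then have "b \<le> i - 1" "i - 1 \<le> a + m" using ab by auto
  then show ?thesis unfolding dbl_def using ab by blast
qed

lemma sig_noncoll: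
  assumes i: "i \<in> {1..n}" and j: "j \<in> {1..n}" and ij: "i < j" and e: "perm_of m n U i = perm_of m n U j"
  shows False
proof (cases "i \<in> U")
  case iU: True
  show False
  proof (cases "j \<in> U")
    case True then show False using e sig_up[OF iU] sig_up[OF True] ij by simp
  next
    case jU: False
    note d = sig_down[OF j jU]
    show False
    proof (cases "dbl m U (j - 1)")
      case True
      then obtain a b where ab: "a \<in> U" "b \<in> U" "a < b" "b \<le> j - 1" "j - 1 \<le> a + m" unfolding dbl_def by auto
      have "i + m = j - 2" using e d True sig_up[OF iU] by simp
      then have "i < a" using ab d by linarith
      then have "i + m + 2 \<le> b" using gtri[OF iU ab(1) ab(2)] ab by simp
      then show False using ab \<open>i + m = j - 2\<close> d by linarith
    next
      case False
      have im: "i + m = j - 1" using e d False sig_up[OF iU] by simp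
      obtain u where u: "u \<in> U" "u \<le> j" "j \<le> u + m" using gcov[of j] j by auto
      have "u \<noteq> j" using u jU by auto
      then have "dbl m U (j - 1)" unfolding dbl_def using u iU im d
        by (intro bexI[of _ i] bexI[of _ u]) (simp_all, linarith+)
      then show False using False by simp
    qed
  qed
next
  case iU: False
  note di = sig_down[OF i iU]
  show False
  proof (cases "j \<in> U")
    case True
    then show False using e sig_up[OF True] di ij by (simp split: if_splits)
  next
    case jU: False
    note dj = sig_down[OF j jU]
    have "j = i + 1 \<and> \<not> dbl m U (i - 1) \<and> dbl m U (j - 1)"
      using e di dj ij by (simp split: if_splits; linarith)
    then have j1: "j = i + 1" and d1: "\<not> dbl m U (i - 1)" and d2: "dbl m U (j - 1)" by auto
    have "dbl m U i" using d2 j1 by simp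
    then show False using dbl_mono iU d1 by blast
  qed
qed

lemma sig_inj: "inj_on (perm_of m n U) {1..n}"
proof (rule inj_onI)
  fix i j assume "i \<in> {1..n}" "j \<in> {1..n}" "perm_of m n U i = perm_of m n U j"
  then show "i = j" using sig_noncoll by (metis linorder_neqE_nat)
qed

lemma sig_valid: "validp m n (perm_of m n U)"
proof -
  have im: "perm_of m n U ` {1..n} = {1..n}"
    by (rule endo_inj_surj) (use sig_rng sig_inj in auto)
  have "perm_of m n U permutes {1..n}"
    by (rule bij_imp_permutes) (use im sig_inj in \<open>auto simp: bij_betw_def perm_of_def\<close>)
  moreover have "\<forall>i\<in>{1..n}. perm_of m n U i = i + m \<or> perm_of m n U i + 1 = i \<or> perm_of m n U i + 2 = i"
  proof
    fix i assume i: "i \<in> {1..n}"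
    show "perm_of m n U i = i + m \<or> perm_of m n U i + 1 = i \<or> perm_of m n U i + 2 = i"
    proof (cases "i \<in> U")
      case True then show ?thesis using sig_up[OF True] by simp
    next
      case False
      note d = sig_down[OF i False]
      show ?thesis
      proof (cases "dbl m U (i - 1)")
        case True
        then have "perm_of m n U i = i - 2" using d by simp
        then show ?thesis using d(1) by linarith
      next
        case False
        then have "perm_of m n U i = i - 1" using d by simp
        then show ?thesis using d(1) by linarith
      qed
    qed
  qed
  ultimately show ?thesis unfolding validp_def by simp
qed

lemma sig_upset: "upset m n (perm_of m n U) = U"
proof (intro set_eqI iffI)
  fix i assume "i \<in> upset m n (perm_of m n U)"
  then have i: "i \<in> {1..n}" "perm_of m n U i = i + m" unfolding upset_def by auto
  show "i \<in> U"
  proof (rule ccontr)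
    assume "i \<notin> U"
    then show False using sig_down[OF i(1)] i by (simp split: if_splits)
  qed
next
  fix i assume "i \<in> U"
  then show "i \<in> upset m n (perm_of m n U)" using sig_up[OF \<open>i \<in> U\<close>] gU[OF \<open>i \<in> U\<close>] unfolding upset_def by simp
qed

end

lemma card_perms:
  assumes "1 \<le> n"
  shows "card {p. validp m n p} = card {U. goodU m n U}"
proof -
  have "{p. validp m n p} = perm_of m n ` {U. goodU m n U}"
  proof (intro set_eqI iffI)
    fix p assume "p \<in> {p. validp m n p}"
    then have v: "validp m n p" by simp
    show "p \<in> perm_of m n ` {U. goodU m n U}"
      using p_eq_perm_of[OF v assms] good_upset[OF v assms] by blast
  next
    fix p assume "p \<in> perm_of m n ` {U. goodU m n U}"
    then show "p \<in> {p. validp m n p}" using sig_valid by auto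
  qed
  moreover have "inj_on (perm_of m n) {U. goodU m n U}"
    by (rule inj_on_inverseI[where g = "upset m n"]) (use sig_upset in auto)
  ultimately show ?thesis by (simp add: card_image)
qed




lemma teeth_iff:
  "x \<in> comb_teeth t p \<longleftrightarrow> x mod 2 = p mod 2 \<and> p div 2 \<le> x div 2 \<and> x div 2 < p div 2 + t"
proof
  assume "x \<in> comb_teeth t p"
  then obtain i where "i < t" "x = p + 2 * i" unfolding comb_teeth_def by auto
  then show "x mod 2 = p mod 2 \<and> p div 2 \<le> x div 2 \<and> x div 2 < p div 2 + t" by auto
next
  assume h: "x mod 2 = p mod 2 \<and> p div 2 \<le> x div 2 \<and> x div 2 < p div 2 + t"
  define i where "i = x div 2 - p div 2"
  have e1: "x = 2 * (x div 2) + x mod 2" by simp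
  have e2: "p = 2 * (p div 2) + p mod 2" by simp
  have "x = p + 2 * i" unfolding i_def using h e1 e2 by linarith
  moreover have "i < t" unfolding i_def using h by linarith
  ultimately show "x \<in> comb_teeth t p" unfolding comb_teeth_def by auto
qed

lemma teeth1: "comb_teeth 1 q = {q}" unfolding comb_teeth_def by auto

lemma teeth_cell:
  assumes "r < 2"
  shows "x \<in> comb_teeth t (2 * s + r) \<longleftrightarrow> x mod 2 = r \<and> s \<le> x div 2 \<and> x div 2 < s + t"
  using assms by (simp add: teeth_iff)


definition Sof :: "nat \<Rightarrow> (nat \<times> nat) set \<Rightarrow> nat set" where
  "Sof k C = (\<lambda>p. p div 2) ` {p. (k, p) \<in> C}"

definition eof :: "nat \<Rightarrow> (nat \<times> nat) set \<Rightarrow> nat" where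
  "eof k C = (if (k, 0) \<in> C then 0 else 1)"

definition par :: "nat set \<Rightarrow> nat \<Rightarrow> nat \<Rightarrow> nat" where
  "par S e s = (e + card {t\<in>S. t < s}) mod 2"

definition goodS :: "nat \<Rightarrow> nat \<Rightarrow> nat set \<Rightarrow> bool" where
  "goodS k l S \<longleftrightarrow> (\<forall>s\<in>S. s + k \<le> l) \<and> (\<forall>x. 0 < x \<and> x < l \<longrightarrow> (\<exists>s\<in>S. s < x \<and> x < s + k))
     \<and> (\<forall>a\<in>S. \<forall>b\<in>S. \<forall>c\<in>S. a < b \<and> b < c \<longrightarrow> a + k \<le> c)"

definition Gof :: "nat \<Rightarrow> nat \<Rightarrow> nat set \<times> nat \<Rightarrow> (nat \<times> nat) set" where
  "Gof k l Se = (\<lambda>s. (k, 2 * s + par (fst Se) (snd Se) s)) ` (fst Se)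
     \<union> (\<lambda>q. (1, q)) ` {q. q < 2 * l \<and> (\<forall>s\<in>fst Se. q \<notin> comb_teeth k (2 * s + par (fst Se) (snd Se) s))}"

context
  fixes k l C
  assumes k2: "2 \<le> k" and l2: "2 \<le> l" and mt: "is_metatile {1, k} l C" and mx: "is_mixed C"
begin

lemma tfin: "finite C" using mt unfolding is_metatile_def is_tiling_def by blast
lemma tT: "c \<in> C \<Longrightarrow> fst c = 1 \<or> fst c = k" using mt unfolding is_metatile_def is_tiling_def by blast
lemma tdisj: "c \<in> C \<Longrightarrow> c' \<in> C \<Longrightarrow> c \<noteq> c' \<Longrightarrow> x \<in> comb_teeth (fst c) (snd c) \<Longrightarrow> x \<in> comb_teeth (fst c') (snd c') \<Longrightarrow> False"
  using mt unfolding is_metatile_def is_tiling_def by blast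
lemma tcov: "(\<Union>c\<in>C. comb_teeth (fst c) (snd c)) = {..<2 * l}"
  using mt unfolding is_metatile_def is_tiling_def by blast
lemma tin: "c \<in> C \<Longrightarrow> x \<in> comb_teeth (fst c) (snd c) \<Longrightarrow> x < 2 * l"
  using tcov by blast
lemma nocut: "0 < x \<Longrightarrow> x < l \<Longrightarrow> \<exists>c\<in>C. \<not> comb_teeth (fst c) (snd c) \<subseteq> {..<2 * x} \<and> \<not> comb_teeth (fst c) (snd c) \<subseteq> {2 * x..}"
  using mt unfolding is_metatile_def is_cut_point_def by blast

lemma D1: "(k, p) \<in> C \<Longrightarrow> p div 2 + k \<le> l"
proof -
  assume h: "(k, p) \<in> C"
  define y where "y = 2 * (p div 2 + k - 1) + p mod 2"
  have "y \<in> comb_teeth k p" unfolding teeth_iff y_def using k2 by auto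
  then have "y < 2 * l" using tin[OF h] by simp
  then show ?thesis unfolding y_def using k2 by linarith
qed

lemma D2: "(k, p) \<in> C \<Longrightarrow> (k, p') \<in> C \<Longrightarrow> p \<noteq> p' \<Longrightarrow> p mod 2 = p' mod 2 \<Longrightarrow> p div 2 \<le> p' div 2 \<Longrightarrow> p div 2 + k \<le> p' div 2"
proof (rule ccontr)
  assume h: "(k, p) \<in> C" "(k, p') \<in> C" "p \<noteq> p'" "p mod 2 = p' mod 2" "p div 2 \<le> p' div 2" "\<not> p div 2 + k \<le> p' div 2"
  have "p' \<in> comb_teeth k p" unfolding teeth_iff using h by auto
  moreover have "p' \<in> comb_teeth k p'" unfolding teeth_iff using k2 by auto
  ultimately show False using tdisj[OF h(1) h(2)] h(3) by auto
qed

lemma D3: "0 < x \<Longrightarrow> x < l \<Longrightarrow> \<exists>p. (k, p) \<in> C \<and> p div 2 < x \<and> x < p div 2 + k"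
proof -
  assume x: "0 < x" "x < l"
  obtain c where c: "c \<in> C" "\<not> comb_teeth (fst c) (snd c) \<subseteq> {..<2 * x}" "\<not> comb_teeth (fst c) (snd c) \<subseteq> {2 * x..}"
    using nocut[OF x] by blast
  obtain t p where tp: "c = (t, p)" by (cases c)
  have "t \<noteq> 1"
  proof
    assume "t = 1"
    then have "comb_teeth (fst c) (snd c) = {p}" using tp teeth1 by simp
    then show False using c(2,3) by auto
  qed
  then have "t = k" using tT[OF c(1)] tp by simp
  have ck: "comb_teeth (fst c) (snd c) = comb_teeth k p" using tp \<open>t = k\<close> by simp
  have "\<exists>y\<in>comb_teeth k p. y \<notin> {..<2 * x}" using c(2) unfolding ck subset_iff by blast
  then obtain y1 where y1: "y1 \<in> comb_teeth k p" "y1 \<ge> 2 * x" by auto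
  have "\<exists>y\<in>comb_teeth k p. y \<notin> {2 * x..}" using c(3) unfolding ck subset_iff by blast
  then obtain y2 where y2: "y2 \<in> comb_teeth k p" "y2 < 2 * x" by auto
  have a1: "y1 div 2 < p div 2 + k" using y1(1) unfolding teeth_iff by blast
  have a2: "y1 = 2 * (y1 div 2) + y1 mod 2" "y1 mod 2 < 2" by simp_all
  have "x < p div 2 + k" using a1 a2 y1(2) by linarith
  moreover have b1: "p div 2 \<le> y2 div 2" using y2(1) unfolding teeth_iff by blast
  have b2: "y2 = 2 * (y2 div 2) + y2 mod 2" by simp
  have "p div 2 < x" using b1 b2 y2(2) by linarith
  ultimately show ?thesis using c(1) tp \<open>t = k\<close> by blast
qed

lemma parity_cases: "(a::nat) mod 2 = b mod 2 \<or> a mod 2 = c mod 2 \<or> b mod 2 = c mod 2"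
  by presburger

lemma D4: "(k, p) \<in> C \<Longrightarrow> (k, p') \<in> C \<Longrightarrow> p \<noteq> p' \<Longrightarrow> p div 2 \<noteq> p' div 2"
proof
  assume h: "(k, p) \<in> C" "(k, p') \<in> C" "p \<noteq> p'" "p div 2 = p' div 2"
  define s where "s = p div 2"
  have e1: "p = 2 * (p div 2) + p mod 2" "p' = 2 * (p' div 2) + p' mod 2" by simp_all
  have par: "p mod 2 \<noteq> p' mod 2"
  proof
    assume "p mod 2 = p' mod 2"
    then have "p = p'" using e1 h(4) by linarith
    then show False using h(3) by simp
  qed
  have fit: "s + k \<le> l" using D1[OF h(1)] s_def by simp
  have other: "q mod 2 = p mod 2 \<or> q mod 2 = p' mod 2" for q using par by presburger
  have s0: "s = 0"
  proof (rule ccontr)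
    assume "s \<noteq> 0"
    then obtain q where q: "(k, q) \<in> C" "q div 2 < s" "s < q div 2 + k" using D3[of s] fit k2 by auto
    show False
    proof (cases "q mod 2 = p mod 2")
      case True
      have "q div 2 + k \<le> p div 2" by (rule D2[OF q(1) h(1)]) (use q True s_def in auto)
      then show False using q s_def by simp
    next
      case False
      then have "q mod 2 = p' mod 2" using other by blast
      have "q div 2 + k \<le> p' div 2" by (rule D2[OF q(1) h(2)]) (use q \<open>q mod 2 = p' mod 2\<close> s_def h(4) in auto)
      then show False using q s_def h(4) by simp
    qed
  qed
  have sl: "s + k = l"
  proof (rule ccontr)
    assume "s + k \<noteq> l"
    then have "s + k < l" using fit by simp
    then obtain q where q: "(k, q) \<in> C" "q div 2 < s + k" "s + k < q div 2 + k" using D3[of "s + k"] k2 by auto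
    show False
    proof (cases "q mod 2 = p mod 2")
      case True
      have "p div 2 + k \<le> q div 2" by (rule D2[OF h(1) q(1)]) (use q True s_def in auto)
      then show False using q s_def by simp
    next
      case False
      then have "q mod 2 = p' mod 2" using other by blast
      have "p' div 2 + k \<le> q div 2" by (rule D2[OF h(2) q(1)]) (use q \<open>q mod 2 = p' mod 2\<close> s_def h(4) in auto)
      then show False using q s_def h(4) by simp
    qed
  qed
  have sub: "C \<subseteq> {(k, p), (k, p')}"
  proof
    fix c assume c: "c \<in> C"
    obtain t q where tq: "c = (t, q)" by (cases c)
    have "t = 1 \<or> t = k" using tT[OF c] tq by simp
    then have "q \<in> comb_teeth t q" unfolding teeth_iff using k2 by auto
    then have ql: "q < 2 * l" using tin[OF c] tq by simp
    have "q mod 2 = p mod 2 \<or> q mod 2 = p' mod 2" using other by blast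
    then show "c \<in> {(k, p), (k, p')}"
    proof
      assume "q mod 2 = p mod 2"
      then have "q \<in> comb_teeth k p" unfolding teeth_iff using ql s0 sl s_def by auto
      then show ?thesis using tdisj[OF c h(1)] \<open>q \<in> comb_teeth t q\<close> tq by auto
    next
      assume "q mod 2 = p' mod 2"
      then have "q \<in> comb_teeth k p'" unfolding teeth_iff using ql s0 sl s_def h(4) by auto
      then show ?thesis using tdisj[OF c h(2)] \<open>q \<in> comb_teeth t q\<close> tq by auto
    qed
  qed
  then have "fst ` C \<subseteq> {k}" by auto
  then have "card (fst ` C) \<le> card {k}" by (intro card_mono) simp_all
  then show False using mx unfolding is_mixed_def by simp
qed

lemma D5: "\<exists>p. (k, p) \<in> C \<and> p div 2 = 0"
  using D3[of 1] l2 by auto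

lemma zero_in: "0 \<in> Sof k C"
  using D5 unfolding Sof_def by force

lemma Sof_fin: "finite (Sof k C)"
proof -
  have "Sof k C \<subseteq> {..l}" unfolding Sof_def using D1 by force
  then show ?thesis by (rule finite_subset) simp
qed

lemma good_Sof: "goodS k l (Sof k C)"
  unfolding goodS_def
proof (intro conjI)
  show "\<forall>s\<in>Sof k C. s + k \<le> l" unfolding Sof_def using D1 by auto
next
  show "\<forall>x. 0 < x \<and> x < l \<longrightarrow> (\<exists>s\<in>Sof k C. s < x \<and> x < s + k)"
  proof (intro allI impI)
    fix x assume "0 < x \<and> x < l"
    then obtain p where "(k, p) \<in> C" "p div 2 < x" "x < p div 2 + k" using D3 by blast
    then show "\<exists>s\<in>Sof k C. s < x \<and> x < s + k" unfolding Sof_def by force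
  qed
next
  show "\<forall>a\<in>Sof k C. \<forall>b\<in>Sof k C. \<forall>c\<in>Sof k C. a < b \<and> b < c \<longrightarrow> a + k \<le> c"
  proof (intro ballI impI)
    fix a b c assume abc: "a \<in> Sof k C" "b \<in> Sof k C" "c \<in> Sof k C" "a < b \<and> b < c"
    obtain pa where pa: "(k, pa) \<in> C" "a = pa div 2" using abc(1) unfolding Sof_def by auto
    obtain pb where pb: "(k, pb) \<in> C" "b = pb div 2" using abc(2) unfolding Sof_def by auto
    obtain pc where pc: "(k, pc) \<in> C" "c = pc div 2" using abc(3) unfolding Sof_def by auto
    have "pa mod 2 = pb mod 2 \<or> pa mod 2 = pc mod 2 \<or> pb mod 2 = pc mod 2" by (rule parity_cases)
    then show "a + k \<le> c"
    proof (elim disjE)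
      assume h: "pa mod 2 = pb mod 2"
      have "pa div 2 + k \<le> pb div 2" by (rule D2[OF pa(1) pb(1)]) (use h abc pa pb in auto)
      then show ?thesis using abc pa pb by simp
    next
      assume h: "pa mod 2 = pc mod 2"
      have "pa div 2 + k \<le> pc div 2" by (rule D2[OF pa(1) pc(1)]) (use h abc pa pc in auto)
      then show ?thesis using abc pa pc by simp
    next
      assume h: "pb mod 2 = pc mod 2"
      have "pb div 2 + k \<le> pc div 2" by (rule D2[OF pb(1) pc(1)]) (use h abc pb pc in auto)
      then show ?thesis using abc pb pc by simp
    qed
  qed
qed

lemma consec:
  assumes "(k, p) \<in> C" "(k, p') \<in> C" "p' div 2 < p div 2"
    and nb: "\<forall>t\<in>Sof k C. \<not> (p' div 2 < t \<and> t < p div 2)"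
  shows "p mod 2 \<noteq> p' mod 2"
proof -
  have lt: "p div 2 < p' div 2 + k"
  proof (rule ccontr)
    assume "\<not> p div 2 < p' div 2 + k"
    moreover have "p div 2 + k \<le> l" by (rule D1[OF assms(1)])
    ultimately obtain q where q: "(k, q) \<in> C" "q div 2 < p' div 2 + k" "p' div 2 + k < q div 2 + k"
      using D3[of "p' div 2 + k"] k2 by auto
    have "q div 2 \<in> Sof k C" using q(1) unfolding Sof_def by auto
    then show False using nb q \<open>\<not> p div 2 < p' div 2 + k\<close> by auto
  qed
  show ?thesis
  proof
    assume h: "p mod 2 = p' mod 2"
    have "p' div 2 + k \<le> p div 2" by (rule D2[OF assms(2) assms(1)]) (use h assms(3) in auto)
    then show False using lt by simp
  qed
qed

lemma par_rec:
  shows "\<forall>p. (k, p) \<in> C \<and> p div 2 = s \<longrightarrow> p mod 2 = par (Sof k C) (eof k C) s"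
proof (induction s rule: less_induct)
  case (less s)
  show ?case
  proof (intro allI impI)
    fix p assume hp: "(k, p) \<in> C \<and> p div 2 = s"
    show "p mod 2 = par (Sof k C) (eof k C) s"
    proof (cases "s = 0")
      case True
      then have par0: "par (Sof k C) (eof k C) s = eof k C" unfolding par_def eof_def by simp
      have "p = 0 \<or> p = 1" using hp True by auto
      then show ?thesis
      proof
        assume "p = 0" then show ?thesis using par0 hp unfolding eof_def by simp
      next
        assume p1: "p = 1"
        have "(k, 0) \<notin> C"
        proof
          assume "(k, 0) \<in> C"
          then show False using D4[of 0 1] hp p1 by simp
        qed
        then show ?thesis using par0 p1 unfolding eof_def by simp
      qed
    next
      case False
      define A where "A = {t\<in>Sof k C. t < s}"
      have Afin: "finite A" unfolding A_def using Sof_fin by simp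
      have Ane: "A \<noteq> {}" unfolding A_def using zero_in False by auto
      define s' where "s' = Max A"
      have s'A: "s' \<in> A" unfolding s'_def using Afin Ane by simp
      have s'max: "t \<in> A \<Longrightarrow> t \<le> s'" for t unfolding s'_def using Afin by simp
      have s's: "s' < s" "s' \<in> Sof k C" using s'A unfolding A_def by auto
      obtain p' where p': "(k, p') \<in> C" "p' div 2 = s'" using s's(2) unfolding Sof_def by auto
      have nb: "\<forall>t\<in>Sof k C. \<not> (p' div 2 < t \<and> t < p div 2)"
        using s'max p' hp unfolding A_def by force
      have ne: "p mod 2 \<noteq> p' mod 2" by (rule consec[OF _ p'(1)]) (use hp p' s's nb in auto)
      have IH: "p' mod 2 = par (Sof k C) (eof k C) s'" using less s's p' by blast
      have Aeq: "A = insert s' {t\<in>Sof k C. t < s'}" 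
        using s'max s's unfolding A_def by force
      have "card A = Suc (card {t\<in>Sof k C. t < s'})"
        unfolding Aeq by (rule card_insert_disjoint) (use Sof_fin in auto)
      then have "par (Sof k C) (eof k C) s = (eof k C + Suc (card {t\<in>Sof k C. t < s'})) mod 2"
        unfolding par_def A_def by simp
      then show ?thesis using ne IH unfolding par_def by presburger
    qed
  qed
qed

lemma par_of: "(k, p) \<in> C \<Longrightarrow> p = 2 * (p div 2) + par (Sof k C) (eof k C) (p div 2)"
  using par_rec[of "p div 2"] by (metis div_mult_mod_eq mult.commute)

lemma GF: "Gof k l (Sof k C, eof k C) = C"
proof (intro set_eqI iffI)
  fix c assume "c \<in> Gof k l (Sof k C, eof k C)"
  then consider (b) s where "s \<in> Sof k C" "c = (k, 2 * s + par (Sof k C) (eof k C) s)"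
    | (q) q where "q < 2 * l" "\<forall>s\<in>Sof k C. q \<notin> comb_teeth k (2 * s + par (Sof k C) (eof k C) s)" "c = (1, q)"
    unfolding Gof_def by auto
  then show "c \<in> C"
  proof cases
    case b
    then obtain p where p: "(k, p) \<in> C" "s = p div 2" unfolding Sof_def by auto
    then show ?thesis using b par_of[OF p(1)] by simp
  next
    case q
    then have "q \<in> (\<Union>c\<in>C. comb_teeth (fst c) (snd c))" using tcov by simp
    then obtain c' where c': "c' \<in> C" "q \<in> comb_teeth (fst c') (snd c')" by blast
    obtain t p where tp: "c' = (t, p)" by (cases c')
    show ?thesis
    proof (cases "t = k")
      case True
      have "p div 2 \<in> Sof k C" using c' tp True unfolding Sof_def by force
      then have "q \<notin> comb_teeth k p" using q(2) par_of[of p] c' tp True by auto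
      then show ?thesis using c' tp True by simp
    next
      case False
      then have "t = 1" using tT[OF c'(1)] tp by simp
      then have "p = q" using c' tp teeth1 by simp
      then show ?thesis using c' tp \<open>t = 1\<close> q by simp
    qed
  qed
next
  fix c assume c: "c \<in> C"
  obtain t p where tp: "c = (t, p)" by (cases c)
  show "c \<in> Gof k l (Sof k C, eof k C)"
  proof (cases "t = k")
    case True
    have "p div 2 \<in> Sof k C" using c tp True unfolding Sof_def by force
    then show ?thesis unfolding Gof_def using par_of[of p] c tp True by (auto intro!: image_eqI[of _ _ "p div 2"])
  next
    case False
    then have t1: "t = 1" using tT[OF c] tp by simp
    have pl: "p < 2 * l" using tin[OF c] tp t1 teeth1 by simp
    have "\<forall>s\<in>Sof k C. p \<notin> comb_teeth k (2 * s + par (Sof k C) (eof k C) s)"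
    proof
      fix s assume "s \<in> Sof k C"
      then obtain p' where p': "(k, p') \<in> C" "s = p' div 2" unfolding Sof_def by auto
      have "2 * s + par (Sof k C) (eof k C) s = p'" using par_of[OF p'(1)] p'(2) by simp
      moreover have "(k, p') \<noteq> c" using tp t1 k2 by auto
      ultimately show "p \<notin> comb_teeth k (2 * s + par (Sof k C) (eof k C) s)"
        using tdisj[OF p'(1) c] tp t1 teeth1 by auto
    qed
    then show ?thesis unfolding Gof_def using tp t1 pl by auto
  qed
qed

end


context
  fixes k l :: nat and S :: "nat set" and e :: nat
  assumes k2: "2 \<le> k" and l2: "2 \<le> l" and g: "goodS k l S" and e2: "e < 2"
begin

lemma gfit: "s \<in> S \<Longrightarrow> s + k \<le> l" using g unfolding goodS_def by blast
lemma scov: "0 < x \<Longrightarrow> x < l \<Longrightarrow> \<exists>s\<in>S. s < x \<and> x < s + k" using g unfolding goodS_def by blast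
lemma stri: "a \<in> S \<Longrightarrow> b \<in> S \<Longrightarrow> c \<in> S \<Longrightarrow> a < b \<Longrightarrow> b < c \<Longrightarrow> a + k \<le> c"
  using g unfolding goodS_def by blast

lemma Sfin: "finite S"
proof -
  have "S \<subseteq> {..l}" using gfit by force
  then show ?thesis by (rule finite_subset) simp
qed

lemma zeroS: "0 \<in> S"
  using scov[of 1] l2 by auto

lemma par_lt: "par S e s < 2" unfolding par_def by simp
lemma par0: "par S e 0 = e" unfolding par_def using e2 by simp

lemma par_diff:
  assumes "s \<in> S" "s' \<in> S" "s < s'" "s' < s + k"
  shows "par S e s \<noteq> par S e s'"
proof -
  have nb: "\<not> (t \<in> S \<and> s < t \<and> t < s')" for t
    using stri[of s t s'] assms by auto
  have eq: "{t\<in>S. t < s'} = insert s {t\<in>S. t < s}"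
  proof (intro set_eqI iffI)
    fix t assume t: "t \<in> {t\<in>S. t < s'}"
    then have t1: "t \<in> S" "t < s'" by simp_all
    then have "\<not> s < t" using nb[of t] by blast
    then have "t = s \<or> t < s" by linarith
    then show "t \<in> insert s {t\<in>S. t < s}" using t1 by blast
  next
    fix t assume t: "t \<in> insert s {t\<in>S. t < s}"
    show "t \<in> {t\<in>S. t < s'}"
    proof (cases "t = s")
      case True then show ?thesis using assms(1,3) by simp
    next
      case False then have "t \<in> S" "t < s" using t by simp_all
      then show ?thesis using assms(3) by simp
    qed
  qed
  have "card {t\<in>S. t < s'} = Suc (card {t\<in>S. t < s})"
    unfolding eq by (rule card_insert_disjoint) (use Sfin in auto)
  then show ?thesis unfolding par_def by presburger
qed

lemma bt: "x \<in> comb_teeth k (2 * s + par S e s) \<longleftrightarrow> x mod 2 = par S e s \<and> s \<le> x div 2 \<and> x div 2 < s + k"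
  by (rule teeth_cell) (rule par_lt)

lemma Gmem: "c \<in> Gof k l (S, e) \<longleftrightarrow> (\<exists>s\<in>S. c = (k, 2 * s + par S e s))
   \<or> (\<exists>q. c = (1, q) \<and> q < 2 * l \<and> (\<forall>s\<in>S. q \<notin> comb_teeth k (2 * s + par S e s)))"
  unfolding Gof_def by auto

lemma G_fin: "finite (Gof k l (S, e))"
proof -
  have "Gof k l (S, e) \<subseteq> (\<lambda>s. (k, 2 * s + par S e s)) ` S \<union> (\<lambda>q. (1, q)) ` {..<2 * l}"
    unfolding Gof_def by auto
  then show ?thesis by (rule finite_subset) (use Sfin in simp)
qed

lemma Gteeth:
  assumes c: "c \<in> Gof k l (S, e)" and x: "x \<in> comb_teeth (fst c) (snd c)"
  shows "(\<exists>s\<in>S. c = (k, 2 * s + par S e s) \<and> x mod 2 = par S e s \<and> s \<le> x div 2 \<and> x div 2 < s + k)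
     \<or> (c = (1, x) \<and> x < 2 * l \<and> (\<forall>s\<in>S. x \<notin> comb_teeth k (2 * s + par S e s)))"
proof -
  from c consider (b) s where "s \<in> S" "c = (k, 2 * s + par S e s)"
    | (q) q where "c = (1, q)" "q < 2 * l" "\<forall>s\<in>S. q \<notin> comb_teeth k (2 * s + par S e s)"
    unfolding Gmem by blast
  then show ?thesis
  proof cases
    case b
    then have "x \<in> comb_teeth k (2 * s + par S e s)" using x by simp
    then have "x mod 2 = par S e s \<and> s \<le> x div 2 \<and> x div 2 < s + k" by (simp only: bt)
    then show ?thesis using b by blast
  next
    case q
    then have "x = q" using x teeth1 by simp
    then show ?thesis using q by simp
  qed
qed

lemma G_disj:
  assumes c: "c \<in> Gof k l (S, e)" and c': "c' \<in> Gof k l (S, e)" and ne: "c \<noteq> c'"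
    and x: "x \<in> comb_teeth (fst c) (snd c)" "x \<in> comb_teeth (fst c') (snd c')"
  shows False
proof -
  note A = Gteeth[OF c x(1)] and B = Gteeth[OF c' x(2)]
  show False
  proof (cases "c = (1, x)")
    case True
    then have nx: "\<forall>s\<in>S. x \<notin> comb_teeth k (2 * s + par S e s)" using A k2 by auto
    have "c' \<noteq> (1, x)" using True ne by simp
    then obtain s' where s': "s' \<in> S" "c' = (k, 2 * s' + par S e s')" using B by blast
    have "x \<in> comb_teeth k (2 * s' + par S e s')" using x(2) s'(2) by simp
    then show False using nx s'(1) by blast
  next
    case False
    then obtain s where s: "s \<in> S" "c = (k, 2 * s + par S e s)" "x mod 2 = par S e s" "s \<le> x div 2" "x div 2 < s + k"
      using A by blast
    have nx: "\<not> (\<forall>s\<in>S. x \<notin> comb_teeth k (2 * s + par S e s))" using s x(1) by auto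
    then obtain s' where s': "s' \<in> S" "c' = (k, 2 * s' + par S e s')" "x mod 2 = par S e s'" "s' \<le> x div 2" "x div 2 < s' + k"
      using B by blast
    have "s \<noteq> s'" using s s' ne by auto
    then consider "s < s'" | "s' < s" by linarith
    then show False
    proof cases
      case 1
      have "par S e s \<noteq> par S e s'" by (rule par_diff) (use s s' 1 in linarith)+
      then show False using s s' by simp
    next
      case 2
      have "par S e s' \<noteq> par S e s" by (rule par_diff) (use s s' 2 in linarith)+
      then show False using s s' by simp
    qed
  qed
qed

lemma G_union: "(\<Union>c\<in>Gof k l (S, e). comb_teeth (fst c) (snd c)) = {..<2 * l}"
proof (intro set_eqI iffI)
  fix x assume "x \<in> (\<Union>c\<in>Gof k l (S, e). comb_teeth (fst c) (snd c))"
  then obtain c where c: "c \<in> Gof k l (S, e)" "x \<in> comb_teeth (fst c) (snd c)" by blast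
  note A = Gteeth[OF c]
  show "x \<in> {..<2 * l}"
  proof (cases "c = (1, x)")
    case True then show ?thesis using A k2 by auto
  next
    case False
    then obtain s where s: "s \<in> S" "x div 2 < s + k" using A by blast
    then have "x div 2 < l" using gfit[OF s(1)] by simp
    then show ?thesis by simp
  qed
next
  fix x assume x: "x \<in> {..<2 * l}"
  show "x \<in> (\<Union>c\<in>Gof k l (S, e). comb_teeth (fst c) (snd c))"
  proof (cases "\<exists>s\<in>S. x \<in> comb_teeth k (2 * s + par S e s)")
    case True
    then obtain s where s: "s \<in> S" "x \<in> comb_teeth k (2 * s + par S e s)" by blast
    have "(k, 2 * s + par S e s) \<in> Gof k l (S, e)" unfolding Gmem using s(1) by blast
    then show ?thesis using s(2) by force
  next
    case False
    then have "(1, x) \<in> Gof k l (S, e)" unfolding Gmem using x by auto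
    moreover have "x \<in> comb_teeth (fst (1::nat, x)) (snd (1::nat, x))" using teeth1 by simp
    ultimately show ?thesis by blast
  qed
qed

lemma G_tiling: "is_tiling {1, k} l (Gof k l (S, e))"
  unfolding is_tiling_def
proof (intro conjI)
  show "finite (Gof k l (S, e))" by (rule G_fin)
next
  show "\<forall>c\<in>Gof k l (S, e). fst c \<in> {1, k}" unfolding Gof_def by auto
next
  show "\<forall>c\<in>Gof k l (S, e). \<forall>c'\<in>Gof k l (S, e). c \<noteq> c' \<longrightarrow>
      comb_teeth (fst c) (snd c) \<inter> comb_teeth (fst c') (snd c') = {}"
  proof (intro ballI impI)
    fix c c' assume c: "c \<in> Gof k l (S, e)" and c': "c' \<in> Gof k l (S, e)" and ne: "c \<noteq> c'"
    show "comb_teeth (fst c) (snd c) \<inter> comb_teeth (fst c') (snd c') = {}"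
    proof (rule equals0I)
      fix x assume "x \<in> comb_teeth (fst c) (snd c) \<inter> comb_teeth (fst c') (snd c')"
      then show False using G_disj[OF c c' ne, of x] by blast
    qed
  qed
next
  show "(\<Union>c\<in>Gof k l (S, e). comb_teeth (fst c) (snd c)) = {..<2 * l}" by (rule G_union)
qed

lemma G_nocut: "\<not> (\<exists>x. is_cut_point l (Gof k l (S, e)) x)"
proof
  assume "\<exists>x. is_cut_point l (Gof k l (S, e)) x"
  then obtain x where x: "0 < x" "x < l"
    "\<forall>c\<in>Gof k l (S, e). comb_teeth (fst c) (snd c) \<subseteq> {..<2 * x} \<or> comb_teeth (fst c) (snd c) \<subseteq> {2 * x..}"
    unfolding is_cut_point_def by blast
  obtain s where s: "s \<in> S" "s < x" "x < s + k" using scov[OF x(1,2)] by blast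
  have cin: "(k, 2 * s + par S e s) \<in> Gof k l (S, e)" unfolding Gmem using s by blast
  define y1 where "y1 = 2 * s + par S e s"
  define y2 where "y2 = 2 * (s + k - 1) + par S e s"
  have y1in: "y1 \<in> comb_teeth k (2 * s + par S e s)" unfolding bt y1_def using par_lt[of s] k2 by simp
  have y2in: "y2 \<in> comb_teeth k (2 * s + par S e s)" unfolding bt y2_def using par_lt[of s] k2 by simp
  have "y1 < 2 * x" unfolding y1_def using s par_lt[of s] by linarith
  moreover have "2 * x \<le> y2" unfolding y2_def using s k2 by linarith
  ultimately show False using x(3)[rule_format, OF cin] y1in y2in by auto
qed

lemma G_block: "s \<in> S \<Longrightarrow> (k, 2 * s + par S e s) \<in> Gof k l (S, e)"
  unfolding Gof_def by simp

lemma G_blocks: "(k, p) \<in> Gof k l (S, e) \<Longrightarrow> \<exists>s\<in>S. p = 2 * s + par S e s"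
  unfolding Gof_def using k2 by auto

lemma G_sq: "q < 2 * l \<Longrightarrow> \<forall>s\<in>S. q \<notin> comb_teeth k (2 * s + par S e s) \<Longrightarrow> (1, q) \<in> Gof k l (S, e)"
  unfolding Gof_def by simp

lemma G_mixed: "is_mixed (Gof k l (S, e))"
proof -
  have "(k, 2 * 0 + par S e 0) \<in> Gof k l (S, e)" by (rule G_block[OF zeroS])
  then have c1: "(k, e) \<in> Gof k l (S, e)" using par0 by simp
  have "\<forall>s\<in>S. 1 - e \<notin> comb_teeth k (2 * s + par S e s)"
  proof
    fix s assume "s \<in> S"
    show "1 - e \<notin> comb_teeth k (2 * s + par S e s)"
    proof
      assume hx: "1 - e \<in> comb_teeth k (2 * s + par S e s)"
      have h: "(1 - e) mod 2 = par S e s \<and> s \<le> (1 - e) div 2 \<and> (1 - e) div 2 < s + k"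
        using iffD1[OF bt hx] .
      consider "e = 0" | "e = 1" using e2 by linarith
      then show False
      proof cases
        case 1
        then have "s = 0" using h by simp
        then have "par S e s = 0" using par0 1 by simp
        then show False using h 1 by simp
      next
        case 2
        then have "s = 0" using h by simp
        then have "par S e s = 1" using par0 2 by simp
        then show False using h 2 by simp
      qed
    qed
  qed
  moreover have "1 - e < 2 * l" using l2 by simp
  ultimately have c2: "(1, 1 - e) \<in> Gof k l (S, e)" by (rule G_sq[rotated])
  have i1: "1 \<in> fst ` Gof k l (S, e)" by (rule rev_image_eqI[OF c2]) simp
  have i2: "k \<in> fst ` Gof k l (S, e)" by (rule rev_image_eqI[OF c1]) simp
  have "{1, k} \<subseteq> fst ` Gof k l (S, e)" using i1 i2 by blast
  then have "card {1, k} \<le> card (fst ` Gof k l (S, e))" by (rule card_mono[rotated]) (use G_fin in simp)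
  then show ?thesis unfolding is_mixed_def using k2 by simp
qed

lemma FG_S: "Sof k (Gof k l (S, e)) = S"
proof (intro set_eqI iffI)
  fix s assume "s \<in> Sof k (Gof k l (S, e))"
  then obtain p where p: "(k, p) \<in> Gof k l (S, e)" "s = p div 2" unfolding Sof_def by auto
  obtain s' where s': "s' \<in> S" "p = 2 * s' + par S e s'" using G_blocks[OF p(1)] by blast
  have "p div 2 = s'" using s'(2) par_lt[of s'] by simp
  then show "s \<in> S" using p(2) s'(1) by simp
next
  fix s assume s: "s \<in> S"
  have m: "(k, 2 * s + par S e s) \<in> Gof k l (S, e)" by (rule G_block[OF s])
  have d: "s = (2 * s + par S e s) div 2" using par_lt[of s] by simp
  show "s \<in> Sof k (Gof k l (S, e))" unfolding Sof_def
    by (rule image_eqI[where x = "2 * s + par S e s" and f = "\<lambda>p. p div 2", OF d]) (simp add: m)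
qed

lemma FG_e: "eof k (Gof k l (S, e)) = e"
proof -
  have "(k, 0) \<in> Gof k l (S, e) \<longleftrightarrow> e = 0"
  proof
    assume "(k, 0) \<in> Gof k l (S, e)"
    then obtain s where "s \<in> S" "0 = 2 * s + par S e s" using G_blocks by blast
    then have z: "2 * s + par S e s = 0" by linarith
    then have s0: "s = 0" by linarith
    have "par S e s = 0" using z by linarith
    then show "e = 0" using par0 s0 by simp
  next
    assume "e = 0"
    have "(k, 2 * 0 + par S e 0) \<in> Gof k l (S, e)" by (rule G_block[OF zeroS])
    then show "(k, 0) \<in> Gof k l (S, e)" using par0 \<open>e = 0\<close> by simp
  qed
  then show ?thesis unfolding eof_def using e2 by auto
qed

end


lemma card_MT:
  assumes k2: "2 \<le> k" and l2: "2 \<le> l"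
  shows "card {C. is_metatile {1, k} l C \<and> is_mixed C} = 2 * card {S. goodS k l S}"
proof -
  let ?M = "{C. is_metatile {1, k} l C \<and> is_mixed C}"
  let ?G = "{S. goodS k l S} \<times> {0, 1::nat}"
  have "bij_betw (\<lambda>C. (Sof k C, eof k C)) ?M ?G"
  proof (rule bij_betw_byWitness[where f' = "Gof k l"])
    show "\<forall>C\<in>?M. Gof k l (Sof k C, eof k C) = C"
      using GF[OF k2 l2] by blast
  next
    show "\<forall>a'\<in>?G. (Sof k (Gof k l a'), eof k (Gof k l a')) = a'"
    proof
      fix a' assume "a' \<in> ?G"
      then obtain S e where a: "a' = (S, e)" "goodS k l S" "e < 2" by auto
      show "(Sof k (Gof k l a'), eof k (Gof k l a')) = a'"
        using FG_S[OF k2 l2 a(2) a(3)] FG_e[OF k2 l2 a(2) a(3)] a(1) by simp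
    qed
  next
    show "(\<lambda>C. (Sof k C, eof k C)) ` ?M \<subseteq> ?G"
    proof
      fix x assume "x \<in> (\<lambda>C. (Sof k C, eof k C)) ` ?M"
      then obtain C where C: "is_metatile {1, k} l C" "is_mixed C" "x = (Sof k C, eof k C)" by auto
      have "goodS k l (Sof k C)" by (rule good_Sof[OF k2 l2 C(1) C(2)])
      moreover have "eof k C \<in> {0, 1}" unfolding eof_def by simp
      ultimately show "x \<in> ?G" using C(3) by simp
    qed
  next
    show "Gof k l ` ?G \<subseteq> ?M"
    proof
      fix x assume "x \<in> Gof k l ` ?G"
      then obtain S e where a: "x = Gof k l (S, e)" "goodS k l S" "e < 2" by auto
      have "is_metatile {1, k} l (Gof k l (S, e))" unfolding is_metatile_def
        using G_tiling[OF k2 l2 a(2) a(3)] G_nocut[OF k2 l2 a(2) a(3)] by simp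
      then show "x \<in> ?M" using G_mixed[OF k2 l2 a(2) a(3)] a(1) by simp
    qed
  qed
  then have "card ?M = card ?G" by (rule bij_betw_same_card)
  also have "\<dots> = card {S. goodS k l S} * card {0, 1::nat}" by (rule card_cartesian_product)
  finally show ?thesis by simp
qed

lemma goodU_Suc:
  assumes l2: "2 \<le> l"
  shows "goodU m (l - 1) (Suc ` S) \<longleftrightarrow> goodS (m + 2) l S"
proof -
  have e1: "(\<forall>u\<in>Suc ` S. 1 \<le> u \<and> u + m \<le> l - 1) \<longleftrightarrow> (\<forall>s\<in>S. s + (m + 2) \<le> l)"
    using l2 by auto
  have e2: "(\<forall>x. 1 \<le> x \<and> x \<le> l - 1 \<longrightarrow> (\<exists>u\<in>Suc ` S. u \<le> x \<and> x \<le> u + m))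
      \<longleftrightarrow> (\<forall>x. 0 < x \<and> x < l \<longrightarrow> (\<exists>s\<in>S. s < x \<and> x < s + (m + 2)))"
  proof -
    have "\<And>x. (1 \<le> x \<and> x \<le> l - 1) = (0 < x \<and> x < l)" using l2 by auto
    moreover have "\<And>x. (\<exists>u\<in>Suc ` S. u \<le> x \<and> x \<le> u + m) = (\<exists>s\<in>S. s < x \<and> x < s + (m + 2))"
    proof -
      fix x
      have a: "(\<exists>u\<in>Suc ` S. u \<le> x \<and> x \<le> u + m) = (\<exists>s\<in>S. Suc s \<le> x \<and> x \<le> Suc s + m)" by blast
      have b: "\<And>s. (Suc s \<le> x \<and> x \<le> Suc s + m) = (s < x \<and> x < s + (m + 2))" by auto
      show "(\<exists>u\<in>Suc ` S. u \<le> x \<and> x \<le> u + m) = (\<exists>s\<in>S. s < x \<and> x < s + (m + 2))"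
        unfolding a b ..
    qed
    ultimately show ?thesis by simp
  qed
  have e3: "(\<forall>a\<in>Suc ` S. \<forall>b\<in>Suc ` S. \<forall>c\<in>Suc ` S. a < b \<and> b < c \<longrightarrow> a + m + 2 \<le> c)
      \<longleftrightarrow> (\<forall>a\<in>S. \<forall>b\<in>S. \<forall>c\<in>S. a < b \<and> b < c \<longrightarrow> a + (m + 2) \<le> c)"
    by auto
  show ?thesis unfolding goodU_def goodS_def e1 e2 e3 ..
qed

lemma card_U_S:
  assumes l2: "2 \<le> l"
  shows "card {U. goodU m (l - 1) U} = card {S. goodS (m + 2) l S}"
proof -
  have "{U. goodU m (l - 1) U} = image Suc ` {S. goodS (m + 2) l S}"
  proof (intro set_eqI iffI)
    fix U assume "U \<in> {U. goodU m (l - 1) U}"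
    then have g: "goodU m (l - 1) U" by simp
    have "\<forall>u\<in>U. 1 \<le> u" using g unfolding goodU_def by blast
    then have U: "U = Suc ` ((\<lambda>u. u - 1) ` U)" by (force simp: image_image)
    then have "goodS (m + 2) l ((\<lambda>u. u - 1) ` U)" using g goodU_Suc[OF l2] by metis
    then show "U \<in> image Suc ` {S. goodS (m + 2) l S}" using U by blast
  next
    fix U assume "U \<in> image Suc ` {S. goodS (m + 2) l S}"
    then show "U \<in> {U. goodU m (l - 1) U}" using goodU_Suc[OF l2] by auto
  qed
  moreover have "inj_on (image Suc) {S. goodS (m + 2) l S}"
    by (rule inj_onI) (simp add: inj_image_eq_iff)
  ultimately show ?thesis by (simp add: card_image)
qed

theorem theorem3:
  fixes m l :: nat
  assumes "l > 1"
  shows "mu 1 (m + 2) l = 2 * P_W (l - 1) {-2, -1, int m}"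
proof -
  have l2: "2 \<le> l" using assms by simp
  have "mu 1 (m + 2) l = 2 * card {S. goodS (m + 2) l S}"
    unfolding mu_def by (rule card_MT) (use l2 in simp_all)
  moreover have "P_W (l - 1) {-2, -1, int m} = card {p. validp m (l - 1) p}"
    unfolding P_W_def using validp_iff by (metis (no_types, lifting))
  moreover have "card {p. validp m (l - 1) p} = card {U. goodU m (l - 1) U}"
    by (rule card_perms) (use l2 in simp)
  moreover have "card {U. goodU m (l - 1) U} = card {S. goodS (m + 2) l S}"
    by (rule card_U_S[OF l2])
  ultimately show ?thesis by simp
qed

end
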